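(* Let $Y$ be a compact metric ANR with metric $d$ and let $A\subseteq Y$ be a $\mathcal{Z}$-set. Equip $A\times[0,1]$ with the metric $\rho((z,s),(z',s'))=\max\{d(z,z'),|s-s'|\}$. Then for every $\epsilon>0$ there exist $\delta'>0$ and a continuous map $F: A\times[0,1]\to Y$ that is a $\delta'$-$\epsilon$-map.
   Context: A closed subset $A$ of an ANR $Y$ is a $\mathcal{Z}$-set if there exists a homotopy $H: Y\times[0,1]\to Y$ with $H_0=\mathrm{id}_Y$ and $H_t(Y)\subseteq Y-A$ for all $t>0$. A map $f:X\to Y$ between metric spaces is a $\delta$-$\epsilon$-map if for every subset $S\subseteq Y$ of diameter $\le\delta$, $f^{-1}(S)$ has diameter $\le\epsilon$. *)

theory Defs
  imports "HOL-Analysis.Analysis"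
begin

text \<open>The test spaces X range over all
  metrizable topologies on the carrier type ('a * (nat => real)), which is large enough
  to contain closed copies of Y in every relevant ambient space (e.g. Y x Hilbert cube).\<close>
definition ANR_space :: "'a topology \<Rightarrow> bool" where
  "ANR_space Y \<longleftrightarrow> metrizable_space Y \<and>
     (\<forall>(X :: ('a \<times> (nat \<Rightarrow> real)) topology) S.
        metrizable_space X \<and> closedin X S \<and> (subtopology X S homeomorphic_space Y) \<longrightarrow>
        (\<exists>U. openin X U \<and> S \<subseteq> U \<and> S retract_of_space (subtopology X U)))"

definition Z_set :: "'a topology \<Rightarrow> 'a set \<Rightarrow> bool" where
  "Z_set Y A \<longleftrightarrow> closedin Y A \<and>
     (\<exists>H. continuous_map (prod_topology Y (top_of_set {0..1::real})) Y H \<and>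
          (\<forall>y\<in>topspace Y. H (y, 0) = y) \<and>
          (\<forall>y\<in>topspace Y. \<forall>t\<in>{0<..1}. H (y, t) \<in> topspace Y - A))"

definition diam_le :: "('a \<Rightarrow> 'a \<Rightarrow> real) \<Rightarrow> 'a set \<Rightarrow> real \<Rightarrow> bool" where
  "diam_le d S r \<longleftrightarrow> (\<forall>x\<in>S. \<forall>y\<in>S. d x y \<le> r)"

definition delta_eps_map ::
  "'a set \<Rightarrow> ('a \<Rightarrow> 'a \<Rightarrow> real) \<Rightarrow> 'b set \<Rightarrow> ('b \<Rightarrow> 'b \<Rightarrow> real) \<Rightarrow> ('a \<Rightarrow> 'b) \<Rightarrow> real \<Rightarrow> real \<Rightarrow> bool" where
  "delta_eps_map X dX Y dY f \<delta> \<epsilon> \<longleftrightarrow>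
     (\<forall>S. S \<subseteq> Y \<and> diam_le dY S \<delta> \<longrightarrow> diam_le dX {x\<in>X. f x \<in> S} \<epsilon>)"

definition max_metric :: "('a \<Rightarrow> 'a \<Rightarrow> real) \<Rightarrow> ('a \<times> real) \<Rightarrow> ('a \<times> real) \<Rightarrow> real" where
  "max_metric d p q = max (d (fst p) (fst q)) \<bar>snd p - snd q\<bar>"

end

theory Submission imports Defs begin

lemma mtopology_compare:
  assumes m1: "Metric_space M d1" and m2: "Metric_space M d2"
    and le1: "\<And>x y. x \<in> M \<Longrightarrow> y \<in> M \<Longrightarrow> d1 x y \<le> d2 x y"
    and le2: "\<And>x y. x \<in> M \<Longrightarrow> y \<in> M \<Longrightarrow> d2 x y \<le> 2 * d1 x y"
  shows "Metric_space.mtopology M d1 = Metric_space.mtopology M d2"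
proof -
  interpret A1: Metric_space M d1 by (rule m1)
  interpret A2: Metric_space M d2 by (rule m2)
  show ?thesis
  proof (rule topology_eq[THEN iffD2], intro allI)
    fix U
    show "openin A1.mtopology U = openin A2.mtopology U"
      unfolding A1.openin_mtopology A2.openin_mtopology
    proof (intro iffI conjI allI impI)
      assume H: "U \<subseteq> M \<and> (\<forall>x. x \<in> U \<longrightarrow> (\<exists>r>0. A1.mball x r \<subseteq> U))"
      then show "U \<subseteq> M" by blast
      fix x assume "x \<in> U"
      then obtain r where r: "r > 0" "A1.mball x r \<subseteq> U" using H by blast
      have "A2.mball x r \<subseteq> A1.mball x r" using le1 by (auto simp: A1.mball_def A2.mball_def) (smt (verit, best))
      then show "\<exists>r>0. A2.mball x r \<subseteq> U" using r by blast
    next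
      assume H: "U \<subseteq> M \<and> (\<forall>x. x \<in> U \<longrightarrow> (\<exists>r>0. A2.mball x r \<subseteq> U))"
      then show "U \<subseteq> M" by blast
      fix x assume "x \<in> U"
      then obtain r where r: "r > 0" "A2.mball x r \<subseteq> U" using H by blast
      have "A1.mball x (r/2) \<subseteq> A2.mball x r" using le2 by (auto simp: A1.mball_def A2.mball_def) (smt (verit, best))
      then show "\<exists>r>0. A1.mball x r \<subseteq> U" using r by (intro exI[of _ "r/2"]) auto
    qed
  qed
qed

lemma max_metric_space:
  assumes "Metric_space A d"
  shows "Metric_space (A \<times> {0..1::real}) (max_metric d)"
proof -
  interpret Metric_space A d by (rule assms)
  show ?thesis
  proof
    fix x y z :: "'a \<times> real"
    show "0 \<le> max_metric d x y" by (simp add: max_metric_def)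
    show "max_metric d x y = max_metric d y x" by (simp add: max_metric_def commute abs_minus_commute)
    have e: "max_metric d x y = 0 \<longleftrightarrow> d (fst x) (fst y) = 0 \<and> snd x = snd y"
      unfolding max_metric_def using nonneg[of "fst x" "fst y"] by (smt (verit))
    show "x \<in> A \<times> {0..1} \<Longrightarrow> y \<in> A \<times> {0..1} \<Longrightarrow> (max_metric d x y = 0) = (x = y)"
      unfolding e by (cases x; cases y) auto
    assume "x \<in> A \<times> {0..1}" "y \<in> A \<times> {0..1}" "z \<in> A \<times> {0..1}"
    then have "d (fst x) (fst z) \<le> d (fst x) (fst y) + d (fst y) (fst z)" by (intro triangle) auto
    then show "max_metric d x z \<le> max_metric d x y + max_metric d y z"
      by (simp add: max_metric_def) linarith
  qed
qed

lemma max_metric_topology: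
  assumes "Metric_space Y d" "A \<subseteq> Y"
  shows "Metric_space.mtopology (A \<times> {0..1::real}) (max_metric d) =
         subtopology (prod_topology (Metric_space.mtopology Y d) euclideanreal) (A \<times> {0..1})"
proof -
  interpret Y: Metric_space Y d by (rule assms)
  interpret SA: Submetric Y d A by unfold_locales (rule assms)
  interpret SI: Submetric UNIV dist "{0..1::real}" by unfold_locales auto
  interpret P: Metric_space12 A d "{0..1::real}" dist by unfold_locales
  have e1: "Metric_space.mtopology (A \<times> {0..1::real}) (max_metric d) = P.Prod_metric.mtopology"
  proof (rule mtopology_compare)
    show "Metric_space (A \<times> {0..1::real}) (max_metric d)" by (rule max_metric_space) (rule SA.sub.Metric_space_axioms)
    show "Metric_space (A \<times> {0..1::real}) (prod_dist d dist)" by (rule P.prod_metric)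
    fix x y :: "'a \<times> real"
    assume xy: "x \<in> A \<times> {0..1}" "y \<in> A \<times> {0..1}"
    show "max_metric d x y \<le> prod_dist d dist x y"
      by (cases x; cases y) (simp add: max_metric_def dist_real_def prod_dist_def real_sqrt_sum_squares_ge1 real_sqrt_sum_squares_ge2)
    have "prod_dist d dist x y \<le> d (fst x) (fst y) + dist (snd x) (snd y)"
      using P.prod_metric_le_components[of "fst x" "fst y" "snd x" "snd y"] xy
      by (cases x; cases y) simp
    then show "prod_dist d dist x y \<le> 2 * max_metric d x y"
      by (simp add: max_metric_def dist_real_def max_def)
  qed
  have "P.Prod_metric.mtopology = prod_topology SA.sub.mtopology SI.sub.mtopology"
    by (rule P.mtopology_prod_metric)
  also have "\<dots> = prod_topology (subtopology Y.mtopology A) (subtopology euclideanreal {0..1})"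
    by (simp add: SA.mtopology_submetric SI.mtopology_submetric Met_TC.mtopology_def[symmetric])
  also have "\<dots> = subtopology (prod_topology Y.mtopology euclideanreal) (A \<times> {0..1})"
    by (simp add: subtopology_Times)
  finally show ?thesis using e1 by simp
qed


lemma L_min:
  fixes h :: "'b \<Rightarrow> real"
  assumes "compact_space X" "continuous_map X euclideanreal h" "\<And>p. p \<in> topspace X \<Longrightarrow> h p > 0"
  shows "\<exists>m>0. \<forall>p\<in>topspace X. m \<le> h p"
proof (cases "topspace X = {}")
  case True then show ?thesis by (intro exI[of _ 1]) auto
next
  case False
  have "compactin euclideanreal (h ` topspace X)"
    using assms by (intro image_compactin[of X]) (auto simp: compact_space_def)
  then have "compact (h ` topspace X)" by simp
  then obtain p where p: "p \<in> topspace X" "\<forall>q\<in>topspace X. h p \<le> h q"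
    using compact_attains_inf[of "h ` topspace X"] False by auto
  then show ?thesis using assms(3)[OF p(1)] by blast
qed

definition distA :: "('a \<Rightarrow> 'a \<Rightarrow> real) \<Rightarrow> 'a set \<Rightarrow> 'a \<Rightarrow> real" where
  "distA d A y = Inf ((\<lambda>a. d y a) ` A)"

context Metric_space begin

lemma distA_le: "a \<in> A \<Longrightarrow> distA d A y \<le> d y a"
  unfolding distA_def by (rule cInf_lower) (auto intro: bdd_belowI[of _ 0])

lemma distA_nonneg: "A \<noteq> {} \<Longrightarrow> 0 \<le> distA d A y"
  unfolding distA_def by (rule cInf_greatest) auto

lemma distA_zero: "a \<in> A \<Longrightarrow> a \<in> M \<Longrightarrow> distA d A a = 0"
  using distA_le[of a A a] distA_nonneg[of A a] by auto

lemma distA_lip1: 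
  assumes "A \<subseteq> M" "A \<noteq> {}" "x \<in> M" "y \<in> M"
  shows "distA d A x \<le> distA d A y + d x y"
proof -
  have "distA d A x - d x y \<le> distA d A y"
    unfolding distA_def[of _ _ y]
  proof (rule cInf_greatest)
    show "(\<lambda>a. d y a) ` A \<noteq> {}" using assms by auto
    fix v assume "v \<in> (\<lambda>a. d y a) ` A"
    then obtain a where a: "a \<in> A" "v = d y a" by auto
    have "distA d A x \<le> d x a" by (rule distA_le) fact
    also have "\<dots> \<le> d x y + d y a" using assms a by (intro triangle) auto
    finally show "distA d A x - d x y \<le> v" using a by simp
  qed
  then show ?thesis by simp
qed

lemma distA_lip:
  assumes "A \<subseteq> M" "A \<noteq> {}" "x \<in> M" "y \<in> M"
  shows "\<bar>distA d A x - distA d A y\<bar> \<le> d x y"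
  using distA_lip1[OF assms] distA_lip1[OF assms(1,2,4,3)] commute[of x y] by linarith

lemma distA_pos:
  assumes "closedin mtopology A" "A \<noteq> {}" "y \<in> M" "y \<notin> A"
  shows "0 < distA d A y"
proof -
  have "openin mtopology (M - A)" using assms(1) by (simp add: closedin_def)
  then obtain r where r: "r > 0" "mball y r \<subseteq> M - A"
    using assms(3,4) unfolding openin_mtopology by blast
  have "r \<le> distA d A y"
    unfolding distA_def
  proof (rule cInf_greatest)
    show "(\<lambda>a. d y a) ` A \<noteq> {}" using assms by auto
    fix v assume "v \<in> (\<lambda>a. d y a) ` A"
    then obtain a where a: "a \<in> A" "v = d y a" by auto
    have "a \<in> M" using assms(1) a closedin_subset by fastforce
    then show "r \<le> v" using r a assms(3) by (auto simp: mball_def)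
  qed
  then show ?thesis using r by linarith
qed

lemma distA_cont:
  assumes "A \<subseteq> M" "A \<noteq> {}"
  shows "continuous_map mtopology euclideanreal (distA d A)"
proof -
  have "continuous_map mtopology Met_TC.mtopology (distA d A)"
    unfolding metric_continuous_map[OF Met_TC.Metric_space_axioms]
  proof (intro conjI ballI allI impI)
    fix a and e :: real assume a: "a \<in> M" and e: "e > 0"
    show "\<exists>\<delta>>0. \<forall>x. x \<in> M \<and> d a x < \<delta> \<longrightarrow> dist (distA d A a) (distA d A x) < e"
      using distA_lip[OF assms a] e by (intro exI[of _ e]) (auto simp: dist_real_def intro: le_less_trans)
  qed auto
  then show ?thesis by (simp add: Met_TC.mtopology_def[symmetric])
qed

end

definition tau :: "(nat \<Rightarrow> real) \<Rightarrow> nat \<Rightarrow> real \<Rightarrow> real" where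
  "tau t N s = t N + (\<Sum>k<N. (t k - t (Suc k)) * max 0 (min 1 (1 - (real N * s - real k))))"

lemma tau_G:
  assumes "real i \<le> x" "x \<le> real i + 1"
  shows "(\<Sum>k<n. (t k - t (Suc k)) * max 0 (min 1 (1 - (x - real k)))) =
    (if n \<le> i then 0 else (t i - t (Suc i)) * (real i + 1 - x) + t (Suc i) - t n)"
proof (induction n)
  case 0 then show ?case by simp
next
  case (Suc n)
  consider "n < i" | "n = i" | "n > i" by linarith
  then show ?case
  proof cases
    case 1
    then have "max 0 (min 1 (1 - (x - real n))) = 0" using assms by simp
    then show ?thesis using Suc 1 by simp
  next
    case 2
    then have "max 0 (min 1 (1 - (x - real n))) = real i + 1 - x" using assms by simp
    then show ?thesis using Suc 2 by simp
  next
    case 3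
    then have "max 0 (min 1 (1 - (x - real n))) = 1" using assms by simp
    then show ?thesis using Suc 3 by simp
  qed
qed

lemma tau_eq:
  assumes "i < N" "real i \<le> real N * s" "real N * s \<le> real i + 1"
  shows "tau t N s = t (Suc i) + (t i - t (Suc i)) * (real i + 1 - real N * s)"
  unfolding tau_def tau_G[OF assms(2,3)] using assms(1) by simp

lemma exists_i:
  assumes "0 \<le> x" "x \<le> real N" "N > 0"
  shows "\<exists>i<N. real i \<le> x \<and> x \<le> real i + 1"
proof (cases "x < real N")
  case True
  define i where "i = nat \<lfloor>x\<rfloor>"
  have "real i \<le> x" "x < real i + 1" using assms unfolding i_def by linarith+
  moreover have "i < N" using True \<open>real i \<le> x\<close> by linarith
  ultimately show ?thesis by (intro exI[of _ i]) auto
next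
  case False
  then show ?thesis using assms by (intro exI[of _ "N - 1"]) (auto simp: of_nat_diff)
qed

lemma tau_cont: "continuous_on UNIV (tau t N)"
  unfolding tau_def by (intro continuous_intros)


theorem mainTheorem4:
  fixes Y :: "'a set" and d :: "'a \<Rightarrow> 'a \<Rightarrow> real" and A :: "'a set"
  assumes "Metric_space Y d"
    and "compact_space (Metric_space.mtopology Y d)"
    and "ANR_space (Metric_space.mtopology Y d)"
    and "A \<subseteq> Y"
    and "Z_set (Metric_space.mtopology Y d) A"
  shows "\<forall>\<epsilon>>0. \<exists>\<delta>'>0. \<exists>F.
           continuous_map (Metric_space.mtopology (A \<times> {0..1}) (max_metric d))
                          (Metric_space.mtopology Y d) F \<and>
           F ` (A \<times> {0..1}) \<subseteq> Y \<and>
           delta_eps_map (A \<times> {0..1}) (max_metric d) Y d F \<delta>' \<epsilon>"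
proof (intro allI impI)
  fix \<epsilon> :: real assume epos: "\<epsilon> > 0"
  interpret Metric_space Y d by (rule assms(1))
  have AY: "A \<subseteq> Y" by (rule assms(4))
  have Acl: "closedin mtopology A" using assms(5) by (simp add: Z_set_def)
  obtain H where Hc0: "continuous_map (prod_topology mtopology (top_of_set {0..1::real})) mtopology H"
    and H0: "\<And>y. y \<in> Y \<Longrightarrow> H (y, 0) = y"
    and H1: "\<And>y t. y \<in> Y \<Longrightarrow> t \<in> {0<..1} \<Longrightarrow> H (y, t) \<in> Y - A"
    using assms(5) unfolding Z_set_def by auto
  show "\<exists>\<delta>'>0. \<exists>F.
           continuous_map (Metric_space.mtopology (A \<times> {0..1}) (max_metric d)) mtopology F \<and>
           F ` (A \<times> {0..1}) \<subseteq> Y \<and>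
           delta_eps_map (A \<times> {0..1}) (max_metric d) Y d F \<delta>' \<epsilon>"
  proof (cases "A = {}")
    case True
    interpret E: Metric_space "{}::('a\<times>real) set" "max_metric d"
      using max_metric_space[OF subspace[of "{}"]] by simp
    show ?thesis using True
      by (intro exI[of _ 1] exI[of _ H]) (auto simp: continuous_map_def delta_eps_map_def diam_le_def)
  next
    case False
    define D where "D = A \<times> {0..1::real}"
    define X where "X = subtopology (prod_topology mtopology euclideanreal) D"
    have topX: "topspace X = D" using AY unfolding X_def D_def by auto
    have cA: "compactin mtopology A" using assms(2) Acl by (rule closedin_compact_space)
    have compX: "compact_space X"
      unfolding X_def D_def by (rule compact_space_subtopology) (simp add: compactin_Times cA)
    have eqP: "prod_topology mtopology (top_of_set {0..1::real}) =
               subtopology (prod_topology mtopology euclideanreal) (Y \<times> {0..1})"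
      using prod_topology_subtopology(2)[of mtopology euclideanreal "{0..1::real}"] by simp
    have DY: "(Y \<times> {0..1}) \<inter> D = D" using AY unfolding D_def by auto
    have Hc: "continuous_map X mtopology H"
      using continuous_map_from_subtopology[OF Hc0, of D] unfolding eqP subtopology_subtopology DY X_def .
    have fstc: "continuous_map X mtopology fst"
      unfolding X_def by (rule continuous_map_from_subtopology) (rule continuous_map_fst)
    have sndc: "continuous_map X euclideanreal snd"
      unfolding X_def by (rule continuous_map_from_subtopology) (rule continuous_map_snd)
    define \<phi> where "\<phi> = distA d A"
    have \<phi>c: "continuous_map mtopology euclideanreal \<phi>" unfolding \<phi>_def by (rule distA_cont[OF AY False])
    define g where "g = (\<lambda>p. \<phi> (H p))"
    have gc: "continuous_map X euclideanreal g"
      unfolding g_def using continuous_map_compose[OF Hc \<phi>c] by (simp add: o_def)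
    define e where "e = (\<lambda>p. d (fst p) (H p))"
    have ec: "continuous_map X euclideanreal e"
    proof -
      have "continuous_map X euclideanreal (\<lambda>p. mdist (metric (Y,d)) (fst p) (H p))"
        by (intro continuous_map_mdist) (simp_all add: fstc Hc)
      then show ?thesis unfolding e_def by (simp add: mdist_metric)
    qed
    have gpos: "\<And>z u. z \<in> A \<Longrightarrow> u \<in> {0<..1} \<Longrightarrow> 0 < g (z, u)"
      unfolding g_def \<phi>_def using H1 AY False Acl by (intro distA_pos) auto
    have g0: "\<And>z. z \<in> A \<Longrightarrow> g (z, 0) = 0"
      unfolding g_def \<phi>_def using H0 AY distA_zero by (metis subsetD)
    have e0: "\<And>z. z \<in> A \<Longrightarrow> e (z, 0) = 0"
      unfolding e_def using H0 AY by auto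
    have small: "\<exists>r>0. \<forall>z\<in>A. \<forall>u\<in>{0..1}. u \<le> r \<longrightarrow> h (z, u) < c"
      if hc: "continuous_map X euclideanreal h" and h0: "\<And>z. z \<in> A \<Longrightarrow> h (z, 0) = 0" and c: "c > 0" for h c
    proof -
      have "\<exists>m>0. \<forall>p\<in>topspace X. m \<le> max (c - h p) (snd p)"
      proof (rule L_min[OF compX])
        show "continuous_map X euclideanreal (\<lambda>p. max (c - h p) (snd p))"
          by (intro continuous_intros hc sndc)
        fix p assume "p \<in> topspace X"
        then obtain z u where p: "p = (z,u)" "z \<in> A" "u \<in> {0..1}" unfolding topX D_def by auto
        show "0 < max (c - h p) (snd p)"
        proof (cases "u = 0")
          case True then show ?thesis using p h0 c by simp
        next
          case False then show ?thesis using p by (simp add: less_max_iff_disj)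
        qed
      qed
      then obtain m where m: "m > 0" "\<forall>p\<in>D. m \<le> max (c - h p) (snd p)" unfolding topX by blast
      show ?thesis
      proof (intro exI[of _ "m/2"] conjI ballI impI)
        fix z u assume "z \<in> A" "u \<in> {0..1}" "u \<le> m/2"
        then have "m \<le> max (c - h (z,u)) u" using m unfolding D_def by auto
        then show "h (z, u) < c" using \<open>u \<le> m/2\<close> m by (auto simp: max_def split: if_splits)
      qed (use m in auto)
    qed
    have lowbd: "\<exists>m>0. \<forall>z\<in>A. \<forall>u\<in>{t..1}. m \<le> g (z, u)" if t: "t > 0" for t
    proof -
      have "\<exists>m>0. \<forall>p\<in>topspace X. m \<le> max (g p) (t - snd p)"
      proof (rule L_min[OF compX])
        show "continuous_map X euclideanreal (\<lambda>p. max (g p) (t - snd p))"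
          by (intro continuous_intros gc sndc)
        fix p assume "p \<in> topspace X"
        then obtain z u where p: "p = (z,u)" "z \<in> A" "u \<in> {0..1}" unfolding topX D_def by auto
        show "0 < max (g p) (t - snd p)"
        proof (cases "u < t")
          case True then show ?thesis using p by simp
        next
          case False then show ?thesis using p t gpos[of z u] by simp
        qed
      qed
      then obtain m where m: "m > 0" "\<forall>p\<in>D. m \<le> max (g p) (t - snd p)" unfolding topX by blast
      show ?thesis
      proof (intro exI[of _ m] conjI ballI)
        fix z u assume "z \<in> A" "u \<in> {t..1}"
        then have "m \<le> max (g (z,u)) (t - u)" using m t unfolding D_def by auto
        then show "m \<le> g (z, u)" using \<open>u \<in> {t..1}\<close> m by (auto simp: max_def split: if_splits)
      qed (use m in auto)
    qed
    define mm where "mm t = (SOME m. m > 0 \<and> (\<forall>z\<in>A. \<forall>u\<in>{t..1}. m \<le> g (z, u)))" for t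
    have mm: "mm t > 0 \<and> (\<forall>z\<in>A. \<forall>u\<in>{t..1}. mm t \<le> g (z, u))" if "t > 0" for t
      unfolding mm_def using someI_ex[OF lowbd[OF that]] by blast
    obtain r0 where r0: "r0 > 0" "\<forall>z\<in>A. \<forall>u\<in>{0..1}. u \<le> r0 \<longrightarrow> e (z, u) < \<epsilon>/3"
      using small[OF ec e0, of "\<epsilon>/3"] epos by auto
    define t0 where "t0 = min r0 1"
    define nxt where "nxt t = (SOME r. 0 < r \<and> r < t \<and> (\<forall>z\<in>A. \<forall>u\<in>{0..1}. u \<le> r \<longrightarrow> g (z, u) < mm t / 2))" for t
    have nxt: "0 < nxt t \<and> nxt t < t \<and> (\<forall>z\<in>A. \<forall>u\<in>{0..1}. u \<le> nxt t \<longrightarrow> g (z, u) < mm t / 2)"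
      if tpos: "t > 0" for t
    proof -
      obtain r where r: "r > 0" "\<forall>z\<in>A. \<forall>u\<in>{0..1}. u \<le> r \<longrightarrow> g (z, u) < mm t / 2"
        using small[OF gc g0, of "mm t / 2"] mm[OF tpos] by auto
      have "\<exists>r. 0 < r \<and> r < t \<and> (\<forall>z\<in>A. \<forall>u\<in>{0..1}. u \<le> r \<longrightarrow> g (z, u) < mm t / 2)"
        using r tpos by (intro exI[of _ "min r (t/2)"]) auto
      then show ?thesis unfolding nxt_def by (rule someI_ex)
    qed
    define tt where "tt n = (nxt ^^ n) t0" for n
    have ttS: "tt (Suc n) = nxt (tt n)" for n unfolding tt_def by simp
    have ttpos: "tt n > 0" for n
      by (induction n) (use r0 nxt in \<open>auto simp: ttS tt_def t0_def\<close>)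
    have ttdec: "tt (Suc n) \<le> tt n" for n using nxt[OF ttpos[of n]] ttS[of n] by simp
    have ttanti: "m \<le> n \<Longrightarrow> tt n \<le> tt m" for m n
      by (rule lift_Suc_antimono_le[of tt]) (use ttdec in auto)
    have tt0: "tt 0 = t0" unfolding tt_def by simp
    have ttle: "tt n \<le> t0" for n using ttanti[of 0 n] tt0 by simp
    have ttspec: "\<And>z u. z \<in> A \<Longrightarrow> u \<in> {0..1} \<Longrightarrow> u \<le> tt (Suc n) \<Longrightarrow> g (z, u) < mm (tt n) / 2" for n
      using nxt[OF ttpos[of n]] ttS[of n] by auto
    define N where "N = nat \<lceil>2/\<epsilon>\<rceil> + 1"
    have Npos: "N > 0" unfolding N_def by simp
    have "2/\<epsilon> \<le> real N" unfolding N_def by linarith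
    then have N\<epsilon>: "2 / real N \<le> \<epsilon>" using epos Npos by (simp add: divide_le_eq mult.commute)
    define \<mu> where "\<mu> = Min ((\<lambda>k. mm (tt k)) ` {..N})"
    have \<mu>pos: "\<mu> > 0" unfolding \<mu>_def using mm ttpos by (subst Min_gr_iff) auto
    have \<mu>le: "k \<le> N \<Longrightarrow> \<mu> \<le> mm (tt k)" for k unfolding \<mu>_def by (rule Min_le) auto
    define \<delta>' where "\<delta>' = min (\<epsilon>/3) (\<mu>/4)"
    define \<tau> where "\<tau> = tau tt N"
    define F where "F = (\<lambda>p. H (fst p, \<tau> (snd p)))"
    have \<tau>bd: "tt (Suc i) \<le> \<tau> s \<and> \<tau> s \<le> tt i"
      if "i < N" "real i \<le> real N * s" "real N * s \<le> real i + 1" for i s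
    proof -
      have eq: "\<tau> s = tt (Suc i) + (tt i - tt (Suc i)) * (real i + 1 - real N * s)"
        unfolding \<tau>_def by (rule tau_eq[OF that])
      have "0 \<le> (tt i - tt (Suc i)) * (real i + 1 - real N * s)" using ttdec[of i] that by simp
      moreover have "(tt i - tt (Suc i)) * (real i + 1 - real N * s) \<le> (tt i - tt (Suc i)) * 1"
        using ttdec[of i] that by (intro mult_left_mono) auto
      ultimately show ?thesis unfolding eq by simp
    qed
    have getI: "\<exists>i<N. real i \<le> real N * s \<and> real N * s \<le> real i + 1" if "s \<in> {0..1}" for s
      using that Npos by (intro exists_i) auto
    have \<tau>range: "0 < \<tau> s \<and> \<tau> s \<le> t0" if s01: "s \<in> {0..1}" for s
    proof -
      obtain i where "i < N" "real i \<le> real N * s" "real N * s \<le> real i + 1" using getI[OF s01] by blast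
      then show ?thesis using \<tau>bd[of i s] ttpos[of "Suc i"] ttle[of i] by auto
    qed
    have Fin: "F p \<in> Y - A" if "p \<in> D" for p
      using that \<tau>range[of "snd p"] AY unfolding F_def D_def t0_def by (intro H1) auto
    have sep: False if z: "z \<in> A" "z' \<in> A" and s: "s \<in> {0..1}" "s' \<in> {0..1}" and ss: "s + 2 / real N \<le> s'"
      and dF: "d (F (z,s)) (F (z',s')) \<le> \<delta>'" for z z' s s'
    proof -
      obtain i where i: "i < N" "real i \<le> real N * s" "real N * s \<le> real i + 1" using getI[OF s(1)] by blast
      obtain i' where i': "i' < N" "real i' \<le> real N * s'" "real N * s' \<le> real i' + 1" using getI[OF s(2)] by blast
      have "real N * (s + 2 / real N) \<le> real N * s'" using ss Npos by (intro mult_left_mono) auto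
      then have Ns: "real N * s + 2 \<le> real N * s'" using Npos by (simp add: distrib_left)
      have "real N * s' \<le> real N" using s(2) mult_left_mono[of s' 1 "real N"] by auto
      then have SSi: "Suc (Suc i) \<le> N" using Ns i by linarith
      have "Suc (Suc i) \<le> Suc i'" using Ns i i' by linarith
      have low: "tt (Suc i) \<le> \<tau> s" using \<tau>bd[OF i] by simp
      have up: "\<tau> s' \<le> tt (Suc (Suc i))"
      proof (cases "Suc (Suc i) \<le> i'")
        case True then show ?thesis using \<tau>bd[OF i'] ttanti[OF True] by simp
      next
        case False
        then have ii: "i' = Suc i" using \<open>Suc (Suc i) \<le> Suc i'\<close> by simp
        then have "real N * s' = real i' + 1" using Ns i i' by simp
        then show ?thesis unfolding \<tau>_def tau_eq[OF i'] ii by simp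
      qed
      have r1: "\<tau> s \<in> {0..1}" "\<tau> s' \<in> {0..1}" using \<tau>range[OF s(1)] \<tau>range[OF s(2)] unfolding t0_def by auto
      have ga: "mm (tt (Suc i)) \<le> g (z, \<tau> s)" using mm[OF ttpos[of "Suc i"]] low r1 z by auto
      have gb: "g (z', \<tau> s') < mm (tt (Suc i)) / 2" using ttspec[of z' "\<tau> s'" "Suc i"] up r1 z by auto
      have mu: "\<mu> \<le> mm (tt (Suc i))" using \<mu>le SSi by simp
      have "\<bar>g (z, \<tau> s) - g (z', \<tau> s')\<bar> \<le> d (F (z,s)) (F (z',s'))"
        using Fin[of "(z,s)"] Fin[of "(z',s')"] z s AY False distA_lip[of A "F (z,s)" "F (z',s')"]
        unfolding g_def \<phi>_def F_def by (auto simp: D_def)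
      then show False using ga gb mu dF \<mu>pos unfolding \<delta>'_def by linarith
    qed
    show ?thesis
    proof (intro exI[of _ \<delta>'] exI[of _ F] conjI)
      show "\<delta>' > 0" unfolding \<delta>'_def using epos \<mu>pos by simp
      show "F ` (A \<times> {0..1}) \<subseteq> Y" using Fin unfolding D_def by auto
      have "continuous_map X mtopology F"
      proof -
        have c\<tau>: "continuous_map X euclideanreal (\<lambda>p. \<tau> (snd p))"
          using continuous_map_compose[OF sndc, of euclideanreal \<tau>] tau_cont[of tt N]
          unfolding \<tau>_def by (simp add: o_def)
        have "continuous_map X (top_of_set {0..1}) (\<lambda>p. \<tau> (snd p))"
          using c\<tau> \<tau>range unfolding topX D_def t0_def
          by (intro continuous_map_into_subtopology) (auto simp: D_def topX less_imp_le)
        then have "continuous_map X (prod_topology mtopology (top_of_set {0..1})) (\<lambda>p. (fst p, \<tau> (snd p)))"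
          using fstc by (simp add: continuous_map_paired)
        then show ?thesis using continuous_map_compose[OF _ Hc0] unfolding F_def by (simp add: o_def)
      qed
      then show "continuous_map (Metric_space.mtopology (A \<times> {0..1}) (max_metric d)) mtopology F"
        unfolding max_metric_topology[OF assms(1) AY] X_def D_def .
      show "delta_eps_map (A \<times> {0..1}) (max_metric d) Y d F \<delta>' \<epsilon>"
        unfolding delta_eps_map_def diam_le_def
      proof (intro allI impI ballI)
        fix S p q
        assume S: "S \<subseteq> Y \<and> (\<forall>x\<in>S. \<forall>y\<in>S. d x y \<le> \<delta>')"
          and p: "p \<in> {x \<in> A \<times> {0..1}. F x \<in> S}" and q: "q \<in> {x \<in> A \<times> {0..1}. F x \<in> S}"
        obtain z s where ps: "p = (z,s)" "z \<in> A" "s \<in> {0..1}" using p by auto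
        obtain z' s' where qs: "q = (z',s')" "z' \<in> A" "s' \<in> {0..1}" using q by auto
        have dF: "d (F (z,s)) (F (z',s')) \<le> \<delta>'" using S p q ps qs by auto
        have dF': "d (F (z',s')) (F (z,s)) \<le> \<delta>'" using dF commute by simp
        have FY: "F (z,s) \<in> Y" "F (z',s') \<in> Y" using Fin ps qs unfolding D_def by auto
        have e1: "d z (F (z,s)) < \<epsilon>/3"
          using r0(2) ps \<tau>range[of s] unfolding e_def F_def t0_def by auto
        have e2: "d z' (F (z',s')) < \<epsilon>/3"
          using r0(2) qs \<tau>range[of s'] unfolding e_def F_def t0_def by auto
        have "d z z' \<le> d z (F (z,s)) + d (F (z,s)) z'" using ps qs FY AY by (intro triangle) auto
        also have "\<dots> \<le> d z (F (z,s)) + (d (F (z,s)) (F (z',s')) + d (F (z',s')) z')"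
          using ps qs FY AY by (intro add_left_mono triangle) auto
        finally have dz: "d z z' \<le> \<epsilon>" using e1 e2 dF commute[of "F (z',s')" z'] unfolding \<delta>'_def by linarith
        have "\<not> s + 2 / real N \<le> s'" using sep[OF ps(2) qs(2) ps(3) qs(3) _ dF] by blast
        moreover have "\<not> s' + 2 / real N \<le> s" using sep[OF qs(2) ps(2) qs(3) ps(3) _ dF'] by blast
        ultimately have "\<bar>s - s'\<bar> \<le> \<epsilon>" using N\<epsilon> by linarith
        then show "max_metric d p q \<le> \<epsilon>" using dz ps qs by (simp add: max_metric_def)
      qed
    qed
  qed
qed

end
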